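(* In the setting of the context, for every $k\in\{0,\dots,K-1\}$ and every fixed sequence of previously observed feature values $f_1,\dots,f_k$, the function $\varpi\mapsto\mathcal{A}_k(\varpi; f_1,\dots,f_k)$ on the probability simplex is concave, continuous, and piecewise linear.
   Context: There are $L$ classes $c_1,\dots,c_L$ with class variable $\mathcal{C}$, and features $F_1,\dots,F_K$ with finitely many values, jointly distributed with $\mathcal{C}$. Let $e_k>0$ be feature evaluation costs, $Q_{ij}\geqslant 0$ misclassification costs, $Q_j=[Q_{1j},\dots,Q_{Lj}]^T$, and on the simplex $\Sigma=\{\varpi\in[0,1]^L:\sum_i\omega_i=1\}$ let $g(\varpi)=\min_{1\leqslant j\leqslant L}Q_j^T\varpi$. Let $\Delta(f_{k+1}\mid f_1,\dots,f_k)=[P(F_{k+1}=f_{k+1}\mid F_1=f_1,\dots,F_k=f_k,\mathcal{C}=c_i)]_{i=1}^L$ (a column vector with nonnegative entries). Define recursively $\bar{J}_K(\varpi;f_1,\dots,f_K)=g(\varpi)$ and, for $k=K-1,\dots,0$, $$\mathcal{A}_k(\varpi;f_1,\dots,f_k)=e_{k+1}+\sum_{f_{k+1}}\Delta^T(f_{k+1}\mid f_1,\dots,f_k)\varpi\;\bar{J}_{k+1}\!\left(\frac{\operatorname{diag}(\Delta(f_{k+1}\mid f_1,\dots,f_k))\varpi}{\Delta^T(f_{k+1}\mid f_1,\dots,f_k)\varpi};f_1,\dots,f_{k+1}\right),$$ $$\bar{J}_k(\varpi;f_1,\dots,f_k)=\min\big[g(\varpi),\mathcal{A}_k(\varpi;f_1,\dots,f_k)\big],$$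 where the sum is over the possible values of $F_{k+1}$ and a summand whose factor $\Delta^T\varpi$ equals $0$ is taken to be $0$. *)

theory Defs
  imports "HOL-Analysis.Analysis" "HOL-Probability.Probability"
begin

text \<open>Classes are the elements of a finite type 'c (so L = CARD('c)); a belief vector
  \<open>\<varpi>\<close> is an element of real^'c. A sample of the joint distribution is a pair
  (class, feature list) where the feature list has length K; feature F_(j+1) is the
  list entry at index j.\<close>

definition prob_simplex :: "(real ^ 'c::finite) set" where
  "prob_simplex = {w. (\<forall>i. 0 \<le> w $ i) \<and> (\<Sum>i\<in>UNIV. w $ i) = 1}"

definition gcost :: "('c::finite \<Rightarrow> 'c \<Rightarrow> real) \<Rightarrow> real ^ 'c \<Rightarrow> real" where
  "gcost Q w = Min (range (\<lambda>j. \<Sum>i\<in>UNIV. Q i j * w $ i))"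

text \<open>Delta(f | f_1..f_k): conditional probabilities P(F_(k+1) = f | F_1..F_k = fs, C = i),
  with the convention x/0 = 0 when the conditioning event is null.\<close>
definition Delta :: "('c::finite \<times> 'v list) pmf \<Rightarrow> 'v list \<Rightarrow> 'v \<Rightarrow> real ^ 'c" where
  "Delta P fs f = (\<chi> i.
     measure_pmf.prob P {(c, x). c = i \<and> take (Suc (length fs)) x = fs @ [f]}
     / measure_pmf.prob P {(c, x). c = i \<and> take (length fs) x = fs})"

definition Aop :: "('c::finite \<times> 'v::finite list) pmf \<Rightarrow> (nat \<Rightarrow> real)
    \<Rightarrow> ('v list \<Rightarrow> real ^ 'c \<Rightarrow> real) \<Rightarrow> 'v list \<Rightarrow> real ^ 'c \<Rightarrow> real" where
  "Aop P e J fs w = e (Suc (length fs)) +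
     (\<Sum>f\<in>UNIV. (let d = Delta P fs f; s = d \<bullet> w in
        if s = 0 then 0 else s * J (fs @ [f]) (\<chi> i. d $ i * w $ i / s)))"

text \<open>Jrem m fs w = Jbar_k(w; fs) where m = K - k is the number of features not yet seen.\<close>
fun Jrem :: "('c::finite \<times> 'v::finite list) pmf \<Rightarrow> (nat \<Rightarrow> real) \<Rightarrow> ('c \<Rightarrow> 'c \<Rightarrow> real)
    \<Rightarrow> nat \<Rightarrow> 'v list \<Rightarrow> real ^ 'c \<Rightarrow> real" where
  "Jrem P e Q 0 fs w = gcost Q w"
| "Jrem P e Q (Suc m) fs w = min (gcost Q w) (Aop P e (Jrem P e Q m) fs w)"

definition Ak :: "('c::finite \<times> 'v::finite list) pmf \<Rightarrow> (nat \<Rightarrow> real) \<Rightarrow> ('c \<Rightarrow> 'c \<Rightarrow> real)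
    \<Rightarrow> nat \<Rightarrow> 'v list \<Rightarrow> real ^ 'c \<Rightarrow> real" where
  "Ak P e Q K fs w = Aop P e (Jrem P e Q (K - Suc (length fs))) fs w"

definition piecewise_linear_on :: "('a::euclidean_space) set \<Rightarrow> ('a \<Rightarrow> real) \<Rightarrow> bool" where
  "piecewise_linear_on S f \<longleftrightarrow>
     (\<exists>F. finite F \<and> \<Union>F = S \<and>
        (\<forall>C\<in>F. polyhedron C \<and> (\<exists>a b. \<forall>x\<in>C. f x = a \<bullet> x + b)))"

end

theory Submission
  imports Defs
begin

definition rep :: "(real ^ 'c::finite) set \<Rightarrow> (real ^ 'c \<Rightarrow> real) \<Rightarrow> bool" where
  "rep S f \<longleftrightarrow> (\<exists>V. finite V \<and> V \<noteq> {} \<and> (\<forall>w\<in>S. f w = Min ((\<lambda>v. v \<bullet> w) ` V)))"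

lemma Min_add_img:
  fixes w :: "real ^ 'c::finite"
  assumes "finite A" "A \<noteq> {}" "finite B" "B \<noteq> {}"
  shows "Min ((\<lambda>v. v \<bullet> w) ` A) + Min ((\<lambda>v. v \<bullet> w) ` B)
       = Min ((\<lambda>v. v \<bullet> w) ` ((\<lambda>(a,b). a + b) ` (A \<times> B)))"
proof (rule antisym)
  show "Min ((\<lambda>v. v \<bullet> w) ` A) + Min ((\<lambda>v. v \<bullet> w) ` B)
       \<le> Min ((\<lambda>v. v \<bullet> w) ` ((\<lambda>(a,b). a + b) ` (A \<times> B)))"
  proof (subst Min_ge_iff)
    show "finite ((\<lambda>v. v \<bullet> w) ` ((\<lambda>(a,b). a + b) ` (A \<times> B)))" using assms by simp
    show "(\<lambda>v. v \<bullet> w) ` ((\<lambda>(a,b). a + b) ` (A \<times> B)) \<noteq> {}" using assms by simp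
    show "\<forall>a\<in>(\<lambda>v. v \<bullet> w) ` ((\<lambda>(a,b). a + b) ` (A \<times> B)).
           Min ((\<lambda>v. v \<bullet> w) ` A) + Min ((\<lambda>v. v \<bullet> w) ` B) \<le> a"
    proof
      fix z assume "z \<in> (\<lambda>v. v \<bullet> w) ` ((\<lambda>(a,b). a + b) ` (A \<times> B))"
      then obtain a b where ab: "a \<in> A" "b \<in> B" "z = (a + b) \<bullet> w" by auto
      have "Min ((\<lambda>v. v \<bullet> w) ` A) \<le> a \<bullet> w" using ab assms by (intro Min_le) auto
      moreover have "Min ((\<lambda>v. v \<bullet> w) ` B) \<le> b \<bullet> w" using ab assms by (intro Min_le) auto
      ultimately show "Min ((\<lambda>v. v \<bullet> w) ` A) + Min ((\<lambda>v. v \<bullet> w) ` B) \<le> z"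
        using ab by (simp add: inner_add_left)
    qed
  qed
next
  have "Min ((\<lambda>v. v \<bullet> w) ` A) \<in> (\<lambda>v. v \<bullet> w) ` A"
    using assms by (intro Min_in) auto
  then obtain a where a: "a \<in> A" "a \<bullet> w = Min ((\<lambda>v. v \<bullet> w) ` A)"
    by (metis (no_types, lifting) imageE)
  have "Min ((\<lambda>v. v \<bullet> w) ` B) \<in> (\<lambda>v. v \<bullet> w) ` B"
    using assms by (intro Min_in) auto
  then obtain b where b: "b \<in> B" "b \<bullet> w = Min ((\<lambda>v. v \<bullet> w) ` B)"
    by (metis (no_types, lifting) imageE)
  have "Min ((\<lambda>v. v \<bullet> w) ` ((\<lambda>(a,b). a + b) ` (A \<times> B))) \<le> (a + b) \<bullet> w"
    using a b assms by (intro Min_le) auto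
  then show "Min ((\<lambda>v. v \<bullet> w) ` ((\<lambda>(a,b). a + b) ` (A \<times> B)))
      \<le> Min ((\<lambda>v. v \<bullet> w) ` A) + Min ((\<lambda>v. v \<bullet> w) ` B)"
    using a b by (simp add: inner_add_left)
qed

lemma rep_add:
  assumes "rep S f" "rep S g" shows "rep S (\<lambda>w. f w + g w)"
proof -
  obtain A where A: "finite A" "A \<noteq> {}" "\<forall>w\<in>S. f w = Min ((\<lambda>v. v \<bullet> w) ` A)"
    using assms(1) unfolding rep_def by blast
  obtain B where B: "finite B" "B \<noteq> {}" "\<forall>w\<in>S. g w = Min ((\<lambda>v. v \<bullet> w) ` B)"
    using assms(2) unfolding rep_def by blast
  show ?thesis unfolding rep_def
    apply (rule exI[of _ "(\<lambda>(a,b). a + b) ` (A \<times> B)"])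
    using A B Min_add_img[OF A(1,2) B(1,2)] by auto
qed

lemma rep_zero: "rep S (\<lambda>_. 0)"
  unfolding rep_def by (rule exI[of _ "{0}"]) auto

lemma rep_sum:
  assumes "finite I" "\<forall>i\<in>I. rep S (f i)"
  shows "rep S (\<lambda>w. \<Sum>i\<in>I. f i w)"
  using assms
proof (induction I rule: finite_induct)
  case empty then show ?case using rep_zero by simp
next
  case (insert x F)
  then show ?case using rep_add[of S "f x" "\<lambda>w. \<Sum>i\<in>F. f i w"] by simp
qed

lemma rep_min:
  assumes "rep S f" "rep S g" shows "rep S (\<lambda>w. min (f w) (g w))"
proof -
  obtain A where A: "finite A" "A \<noteq> {}" "\<forall>w\<in>S. f w = Min ((\<lambda>v. v \<bullet> w) ` A)"
    using assms(1) unfolding rep_def by blast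
  obtain B where B: "finite B" "B \<noteq> {}" "\<forall>w\<in>S. g w = Min ((\<lambda>v. v \<bullet> w) ` B)"
    using assms(2) unfolding rep_def by blast
  show ?thesis unfolding rep_def
    apply (rule exI[of _ "A \<union> B"])
    using A B by (auto simp: image_Un Min_Un)
qed

lemma rep_mono: "S \<subseteq> T \<Longrightarrow> rep T f \<Longrightarrow> rep S f"
  unfolding rep_def by blast

lemma rep_cong: "rep S f \<Longrightarrow> (\<And>w. w \<in> S \<Longrightarrow> f w = g w) \<Longrightarrow> rep S g"
  unfolding rep_def by metis

lemma rep_gcost: "rep UNIV (gcost Q)"
  unfolding rep_def gcost_def
  apply (rule exI[of _ "range (\<lambda>j. \<chi> i. Q i j)"])
  by (simp add: image_image inner_vec_def mult.commute)

lemma rep_const: "rep prob_simplex (\<lambda>_. c)"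
  unfolding rep_def
  apply (rule exI[of _ "{\<chi> i. c}"])
  by (simp add: prob_simplex_def inner_vec_def sum_distrib_left[symmetric])

lemma Min_scale:
  fixes c :: real
  assumes "c \<ge> 0" "finite V" "V \<noteq> {}"
  shows "c * Min (g ` V) = Min ((\<lambda>v. c * g v) ` V)"
proof -
  have "mono ((*) c)" using assms(1) by (simp add: mono_def mult_left_mono)
  then have "c * Min (g ` V) = Min ((*) c ` g ` V)"
    using assms by (intro mono_Min_commute) auto
  then show ?thesis by (simp add: image_image)
qed

lemma rep_persp:
  fixes d :: "real ^ 'c::finite"
  assumes dnn: "\<forall>i. d $ i \<ge> 0" and J: "rep prob_simplex J"
  shows "rep prob_simplex (\<lambda>w. if d \<bullet> w = 0 then 0
            else (d \<bullet> w) * J (\<chi> i. d $ i * w $ i / (d \<bullet> w)))"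
proof -
  obtain V where V: "finite V" "V \<noteq> {}" "\<forall>w\<in>prob_simplex. J w = Min ((\<lambda>v. v \<bullet> w) ` V)"
    using J unfolding rep_def by blast
  show ?thesis unfolding rep_def
  proof (intro exI[of _ "(\<lambda>v. \<chi> i. v $ i * d $ i) ` V"] conjI ballI)
    show "finite ((\<lambda>v. \<chi> i. v $ i * d $ i) ` V)" "(\<lambda>v. \<chi> i. v $ i * d $ i) ` V \<noteq> {}"
      using V by auto
    fix w :: "real ^ 'c" assume w: "w \<in> prob_simplex"
    have wnn: "\<forall>i. w $ i \<ge> 0" and wsum: "(\<Sum>i\<in>UNIV. w $ i) = 1"
      using w by (auto simp: prob_simplex_def)
    have sdw: "d \<bullet> w = (\<Sum>i\<in>UNIV. d $ i * w $ i)" by (simp add: inner_vec_def)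
    have prodnn: "\<forall>i. d $ i * w $ i \<ge> 0" using dnn wnn by simp
    have img: "(\<lambda>v. v \<bullet> w) ` (\<lambda>v. \<chi> i. v $ i * d $ i) ` V
        = (\<lambda>v. \<Sum>i\<in>UNIV. v $ i * (d $ i * w $ i)) ` V"
      by (simp add: image_image inner_vec_def mult.assoc)
    show "(if d \<bullet> w = 0 then 0 else (d \<bullet> w) * J (\<chi> i. d $ i * w $ i / (d \<bullet> w)))
        = Min ((\<lambda>v. v \<bullet> w) ` (\<lambda>v. \<chi> i. v $ i * d $ i) ` V)"
    proof (cases "d \<bullet> w = 0")
      case True
      then have "\<forall>i\<in>UNIV. d $ i * w $ i = 0"
        using sum_nonneg_eq_0_iff[of UNIV "\<lambda>i. d $ i * w $ i"] prodnn sdw by auto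
      then have "\<And>v. (\<Sum>i\<in>UNIV. v $ i * (d $ i * w $ i)) = 0" by (simp add: sum.neutral)
      then have "(\<lambda>v. \<Sum>i\<in>UNIV. v $ i * (d $ i * w $ i)) ` V = {0}" using V by auto
      then show ?thesis using True img by simp
    next
      case False
      define s where "s = d \<bullet> w"
      have spos: "s > 0" using False sdw prodnn sum_nonneg[of UNIV "\<lambda>i. d $ i * w $ i"]
        unfolding s_def by (auto simp: less_le)
      define p where "p = (\<chi> i. d $ i * w $ i / s)"
      have p: "p \<in> prob_simplex"
        unfolding prob_simplex_def p_def using prodnn spos
        by (auto simp: sum_divide_distrib[symmetric] s_def sdw)
      have "s * J p = s * Min ((\<lambda>v. v \<bullet> p) ` V)" using V p by simp
      also have "\<dots> = Min ((\<lambda>v. s * (v \<bullet> p)) ` V)" using spos V by (intro Min_scale) auto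
      also have "(\<lambda>v. s * (v \<bullet> p)) = (\<lambda>v. \<Sum>i\<in>UNIV. v $ i * (d $ i * w $ i))"
        using spos by (auto simp: p_def inner_vec_def sum_distrib_left)
      finally show ?thesis using False img unfolding p_def s_def by simp
    qed
  qed
qed

lemma Delta_nn: "\<forall>i. Delta P fs f $ i \<ge> 0"
  by (simp add: Delta_def)

lemma rep_Aop:
  assumes "\<forall>f. rep prob_simplex (J (fs @ [f]))"
  shows "rep prob_simplex (Aop P e J fs)"
proof -
  have "rep prob_simplex (\<lambda>w. e (Suc (length fs)) + (\<Sum>f\<in>UNIV.
      (if Delta P fs f \<bullet> w = 0 then 0 else (Delta P fs f \<bullet> w) *
        J (fs @ [f]) (\<chi> i. Delta P fs f $ i * w $ i / (Delta P fs f \<bullet> w)))))"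
    apply (rule rep_add[OF rep_const])
    apply (rule rep_sum)
    using rep_persp[OF Delta_nn assms[rule_format]] by auto
  then show ?thesis unfolding Aop_def[abs_def] Let_def by simp
qed

lemma rep_Jrem: "rep prob_simplex (Jrem P e Q m fs)"
proof (induction m arbitrary: fs)
  case 0
  then show ?case using rep_mono[OF _ rep_gcost] by simp
next
  case (Suc m)
  have "rep prob_simplex (\<lambda>w. min (gcost Q w) (Aop P e (Jrem P e Q m) fs w))"
    by (rule rep_min[OF rep_mono[OF _ rep_gcost] rep_Aop]) (auto simp: Suc)
  then show ?case by simp
qed


lemma simplex_poly: "polyhedron (prob_simplex :: (real ^ 'c::finite) set)"
proof -
  have eq: "(prob_simplex :: (real ^ 'c) set) =
      \<Inter> (range (\<lambda>i. {w. (- axis i 1) \<bullet> w \<le> 0})) \<inter> {w. (\<chi> i. 1) \<bullet> w = 1}"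
  proof -
    have a: "axis i 1 \<bullet> w = w $ i" for i and w :: "real ^ 'c"
      by (simp add: inner_axis')
    have b: "(\<chi> i. 1) \<bullet> w = (\<Sum>i\<in>UNIV. w $ i)" for w :: "real ^ 'c"
      by (simp add: inner_vec_def)
    show ?thesis by (auto simp: prob_simplex_def a b)
  qed
  show ?thesis unfolding eq
    by (intro polyhedron_Int polyhedron_Inter polyhedron_hyperplane)
       (auto simp: polyhedron_halfspace_le polyhedron_halfspace_ge)
qed

lemma Min_img_in:
  fixes w :: "real ^ 'c::finite"
  assumes "finite V" "V \<noteq> {}"
  obtains v where "v \<in> V" "Min ((\<lambda>v. v \<bullet> w) ` V) = v \<bullet> w"
proof -
  have "Min ((\<lambda>v. v \<bullet> w) ` V) \<in> (\<lambda>v. v \<bullet> w) ` V"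
    using assms by (intro Min_in) auto
  then show ?thesis using that by (metis (no_types, lifting) imageE)
qed

lemma rep_concave:
  assumes "rep prob_simplex f" shows "concave_on prob_simplex f"
proof -
  obtain V where V: "finite V" "V \<noteq> {}" "\<forall>w\<in>prob_simplex. f w = Min ((\<lambda>v. v \<bullet> w) ` V)"
    using assms unfolding rep_def by blast
  have cv: "convex (prob_simplex :: (real ^ 'a) set)"
    by (rule polyhedron_imp_convex[OF simplex_poly])
  show ?thesis unfolding concave_on_iff
  proof (intro conjI cv ballI allI impI)
    fix x y :: "real ^ 'a" and u v :: real
    assume xy: "x \<in> prob_simplex" "y \<in> prob_simplex" and uv: "0 \<le> u" "0 \<le> v" "u + v = 1"
    have z: "u *\<^sub>R x + v *\<^sub>R y \<in> prob_simplex" using cv xy uv unfolding convex_def by blast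
    obtain v0 where v0: "v0 \<in> V" "Min ((\<lambda>vv. vv \<bullet> (u *\<^sub>R x + v *\<^sub>R y)) ` V) = v0 \<bullet> (u *\<^sub>R x + v *\<^sub>R y)"
      using Min_img_in[OF V(1,2)] by blast
    have fx: "f x \<le> v0 \<bullet> x" using V xy v0 by (auto intro: Min_le)
    have fy: "f y \<le> v0 \<bullet> y" using V xy v0 by (auto intro: Min_le)
    have "f (u *\<^sub>R x + v *\<^sub>R y) = u * (v0 \<bullet> x) + v * (v0 \<bullet> y)"
      using V z v0 by (simp add: inner_add_right)
    also have "\<dots> \<ge> u * f x + v * f y"
      using fx fy uv by (simp add: add_mono mult_left_mono)
    finally show "u * f x + v * f y \<le> f (u *\<^sub>R x + v *\<^sub>R y)" .
  qed
qed

lemma cont_Min_img: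
  fixes V :: "(real ^ 'c::finite) set"
  assumes "finite V" "V \<noteq> {}"
  shows "continuous_on S (\<lambda>w. Min ((\<lambda>v. v \<bullet> w) ` V))"
  using assms
proof (induction V rule: finite_ne_induct)
  case (singleton x)
  then show ?case by (simp add: continuous_intros)
next
  case (insert x F)
  then show ?case by (simp add: Min_insert continuous_intros)
qed

lemma rep_cont:
  assumes "rep prob_simplex f" shows "continuous_on prob_simplex f"
proof -
  obtain V where V: "finite V" "V \<noteq> {}" "\<forall>w\<in>prob_simplex. f w = Min ((\<lambda>v. v \<bullet> w) ` V)"
    using assms unfolding rep_def by blast
  show ?thesis
    using continuous_on_cong[of prob_simplex prob_simplex f "\<lambda>w. Min ((\<lambda>v. v \<bullet> w) ` V)"]
      cont_Min_img[OF V(1,2)] V(3) by simp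
qed

lemma rep_pl:
  assumes "rep prob_simplex f" shows "piecewise_linear_on prob_simplex f"
proof -
  obtain V where V: "finite V" "V \<noteq> {}" "\<forall>w\<in>prob_simplex. f w = Min ((\<lambda>v. v \<bullet> w) ` V)"
    using assms unfolding rep_def by blast
  define C where "C v = prob_simplex \<inter> \<Inter> ((\<lambda>u. {w. (v - u) \<bullet> w \<le> 0}) ` V)" for v
  show ?thesis unfolding piecewise_linear_on_def
  proof (intro exI[of _ "C ` V"] conjI ballI)
    show "finite (C ` V)" using V by simp
    show "\<Union> (C ` V) = prob_simplex"
    proof
      show "\<Union> (C ` V) \<subseteq> prob_simplex" by (auto simp: C_def)
      show "prob_simplex \<subseteq> \<Union> (C ` V)"
      proof
        fix w :: "real ^ 'a" assume w: "w \<in> prob_simplex"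
        obtain v0 where v0: "v0 \<in> V" "Min ((\<lambda>v. v \<bullet> w) ` V) = v0 \<bullet> w"
          using Min_img_in[OF V(1,2)] by blast
        have "\<forall>u\<in>V. v0 \<bullet> w \<le> u \<bullet> w" using v0 V by (metis Min_le finite_imageI imageI)
        then have "w \<in> C v0" using w by (auto simp: C_def inner_diff_left)
        then show "w \<in> \<Union> (C ` V)" using v0 by blast
      qed
    qed
    fix K assume "K \<in> C ` V"
    then obtain v0 where v0: "v0 \<in> V" "K = C v0" by blast
    show "polyhedron K" unfolding v0 C_def
      using V by (intro polyhedron_Int simplex_poly polyhedron_Inter)
        (auto simp: polyhedron_halfspace_le)
    show "\<exists>a b. \<forall>x\<in>K. f x = a \<bullet> x + b"
    proof (intro exI[of _ v0] exI[of _ 0] ballI)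
      fix x assume x: "x \<in> K"
      then have xs: "x \<in> prob_simplex" and le: "\<forall>u\<in>V. v0 \<bullet> x \<le> u \<bullet> x"
        using v0 by (auto simp: C_def inner_diff_left)
      have "Min ((\<lambda>v. v \<bullet> x) ` V) = v0 \<bullet> x"
        using V v0 le by (intro Min_eqI) auto
      then show "f x = v0 \<bullet> x + 0" using V xs by simp
    qed
  qed
qed

theorem lemma2:
  fixes P :: "('c::finite \<times> 'v::finite list) pmf"
    and Q :: "'c \<Rightarrow> 'c \<Rightarrow> real"
    and e :: "nat \<Rightarrow> real"
    and K k :: nat
    and fs :: "'v list"
  assumes featlen: "\<forall>(c, x) \<in> set_pmf P. length x = K"
    and epos: "\<forall>j\<in>{1..K}. e j > 0"
    and Qnn: "\<forall>i j. Q i j \<ge> 0"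
    and kK: "k < K"
    and fslen: "length fs = k"
  shows "concave_on prob_simplex (Ak P e Q K fs)
       \<and> continuous_on prob_simplex (Ak P e Q K fs)
       \<and> piecewise_linear_on prob_simplex (Ak P e Q K fs)"
proof -
  have r: "rep prob_simplex (Ak P e Q K fs)"
    unfolding Ak_def[abs_def]
    by (rule rep_Aop) (simp add: rep_Jrem)
  show ?thesis using rep_concave[OF r] rep_cont[OF r] rep_pl[OF r] by blast
qed

end
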